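(* Let $n,d$ be positive integers and let $M=M^i_{j,t}$ be an indecomposable non-projective $A_n^{dn}$-module. The following are equivalent: (1) $\underline{\mathrm{Hom}}(M,M)\cong k$, i.e. $M$ is a stable brick; (2) $\ell(M)\le n$ or $(d-1)n+1\le\ell(M)\le dn$; (3) $t=0$ or $t=d-1$.
   Context: $A_n^{dn}=kQ/I$ ($k$ algebraically closed), $Q$ the cyclic quiver with vertices $1,\dots,n$ and arrows $i\to i+1$, $n\to1$, $I$ generated by all paths of length $dn+1$ (a symmetric Nakayama algebra). $M^i_{j,t}$ denotes the indecomposable (uniserial) module with top $S_i$, socle $S_j$, in which $S_i$ occurs exactly $t+1$ times as a composition factor; $\ell(M)$ is its number of composition factors. $\underline{\mathrm{Hom}}$ is Hom modulo morphisms factoring through projectives. *)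

theory Defs
  imports "Jordan_Normal_Form.Matrix" "HOL-Computational_Algebra.Polynomial"
begin

text \<open>Finite-dimensional representations of the bound quiver (Q, I) defining A_n^{dn}
over a field 'k, realised concretely on k^m (column vectors).  Vertices of the cyclic
quiver are 0, ..., n-1 (the paper's vertex v+1 is our v); the arrow starting at v
goes to (v+1) mod n.  A module is given by its dimension, the action of the trivial
paths (orthogonal idempotents) and the action of the arrows.\<close>

record 'k rep =
  rdim :: nat
  ridem :: "nat \<Rightarrow> 'k mat"
  rarr :: "nat \<Rightarrow> 'k mat"

fun idem_sum :: "nat \<Rightarrow> (nat \<Rightarrow> 'k::field mat) \<Rightarrow> nat \<Rightarrow> 'k mat" where
  "idem_sum m E 0 = 0\<^sub>m m m"
| "idem_sum m E (Suc v) = idem_sum m E v + E v"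

fun path_act :: "nat \<Rightarrow> 'k::field rep \<Rightarrow> nat \<Rightarrow> nat \<Rightarrow> 'k mat" where
  "path_act n M v 0 = ridem M v"
| "path_act n M v (Suc L) = rarr M ((v + L) mod n) * path_act n M v L"

definition is_module :: "nat \<Rightarrow> nat \<Rightarrow> 'k::field rep \<Rightarrow> bool" where
  "is_module n d M \<longleftrightarrow>
     (\<forall>v<n. ridem M v \<in> carrier_mat (rdim M) (rdim M)
          \<and> rarr M v \<in> carrier_mat (rdim M) (rdim M))
   \<and> (\<forall>v<n. \<forall>w<n. ridem M v * ridem M w = (if v = w then ridem M v else 0\<^sub>m (rdim M) (rdim M)))
   \<and> idem_sum (rdim M) (ridem M) n = 1\<^sub>m (rdim M)
   \<and> (\<forall>v<n. rarr M v = ridem M ((v + 1) mod n) * rarr M v * ridem M v)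
   \<and> (\<forall>v<n. path_act n M v (d * n + 1) = 0\<^sub>m (rdim M) (rdim M))"

definition is_hom :: "nat \<Rightarrow> 'k::field rep \<Rightarrow> 'k rep \<Rightarrow> 'k mat \<Rightarrow> bool" where
  "is_hom n M N f \<longleftrightarrow> f \<in> carrier_mat (rdim N) (rdim M)
     \<and> (\<forall>v<n. f * ridem M v = ridem N v * f \<and> f * rarr M v = rarr N v * f)"

definition is_surj_hom :: "nat \<Rightarrow> 'k::field rep \<Rightarrow> 'k rep \<Rightarrow> 'k mat \<Rightarrow> bool" where
  "is_surj_hom n M N f \<longleftrightarrow> is_hom n M N f
     \<and> (\<forall>y \<in> carrier_vec (rdim N). \<exists>x \<in> carrier_vec (rdim M). f *\<^sub>v x = y)"

definition projective :: "nat \<Rightarrow> nat \<Rightarrow> 'k::field rep \<Rightarrow> bool" where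
  "projective n d P \<longleftrightarrow> is_module n d P \<and>
     (\<forall>N L g h. is_module n d N \<and> is_module n d L \<and> is_surj_hom n N L g \<and> is_hom n P L h
        \<longrightarrow> (\<exists>h'. is_hom n P N h' \<and> g * h' = h))"

definition factors_through_proj :: "nat \<Rightarrow> nat \<Rightarrow> 'k::field rep \<Rightarrow> 'k rep \<Rightarrow> 'k mat \<Rightarrow> bool" where
  "factors_through_proj n d M N f \<longleftrightarrow>
     (\<exists>(P :: 'k rep) g h. projective n d P \<and> is_hom n M P g \<and> is_hom n P N h \<and> f = h * g)"

text \<open>Stable brick: the stable endomorphism algebra is isomorphic to k, i.e. it is
spanned by the class of the identity and that class is nonzero.\<close>
definition stable_brick :: "nat \<Rightarrow> nat \<Rightarrow> 'k::field rep \<Rightarrow> bool" where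
  "stable_brick n d M \<longleftrightarrow>
     (\<forall>f. is_hom n M M f \<longrightarrow> (\<exists>c. factors_through_proj n d M M (f - c \<cdot>\<^sub>m 1\<^sub>m (rdim M))))
   \<and> \<not> factors_through_proj n d M M (1\<^sub>m (rdim M))"

text \<open>Uniserial module with top at vertex i and l composition factors: basis
b_0, ..., b_(l-1), b_s at vertex (i+s) mod n, the arrow sends b_s to b_(s+1)
(and b_(l-1) to 0).\<close>
definition uniserial :: "nat \<Rightarrow> nat \<Rightarrow> nat \<Rightarrow> 'k::field rep" where
  "uniserial n i l = \<lparr> rdim = l,
     ridem = (\<lambda>v. mat l l (\<lambda>(r, s). if r = s \<and> (i + s) mod n = v then 1 else 0)),
     rarr = (\<lambda>v. mat l l (\<lambda>(r, s). if r = s + 1 \<and> (i + s) mod n = v then 1 else 0)) \<rparr>"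

text \<open>Number of composition factors of M^i_{j,t}: top S_i, socle S_j, S_i occurring t+1 times.\<close>
definition Mlen :: "nat \<Rightarrow> nat \<Rightarrow> nat \<Rightarrow> nat \<Rightarrow> nat" where
  "Mlen n i j t = t * n + (j + n - i) mod n + 1"

definition Mmod :: "nat \<Rightarrow> nat \<Rightarrow> nat \<Rightarrow> nat \<Rightarrow> 'k::field rep" where
  "Mmod n i j t = uniserial n i (Mlen n i j t)"

text \<open>Length (number of composition factors); all simples are 1-dimensional.\<close>
definition ell :: "'k rep \<Rightarrow> nat" where
  "ell M = rdim M"

end

theory Submission
  imports Defs
begin


lemma shift_mat_vec:
  fixes y :: "'k::field vec"
  assumes y: "y \<in> carrier_vec m" and r: "r < m"
  shows "(mat m m (\<lambda>(r, s). if r = s + L \<and> P s then 1 else 0) *\<^sub>v y) $ r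
         = (if L \<le> r \<and> P (r - L) then y $ (r - L) else 0)"
proof -
  have "(mat m m (\<lambda>(r, s). if r = s + L \<and> P s then 1 else 0) *\<^sub>v y) $ r
      = (\<Sum>s\<in>{0..<m}. (if r = s + L \<and> P s then 1 else 0) * y $ s)"
    using y r by (simp add: scalar_prod_def)
  also have "\<dots> = (\<Sum>s\<in>{0..<m}. if s = r - L then (if L \<le> r \<and> P (r - L) then y $ (r - L) else 0) else 0)"
    by (rule sum.cong) auto
  also have "\<dots> = (if L \<le> r \<and> P (r - L) then y $ (r - L) else 0)"
    using r by (auto simp: sum.delta)
  finally show ?thesis .
qed

lemma path_uni:
  "path_act n (uniserial n i0 m) v L = mat m m (\<lambda>(r, s). if r = s + L \<and> (i0 + s) mod n = v then 1 else 0)"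
proof (induction L)
  case 0
  then show ?case by (simp add: uniserial_def)
next
  case (Suc L)
  show ?case
  proof (rule eq_matI)
    fix r s assume r: "r < dim_row (mat m m (\<lambda>(r, s). if r = s + Suc L \<and> (i0 + s) mod n = v then 1 else (0::'a)))"
      and s: "s < dim_col (mat m m (\<lambda>(r, s). if r = s + Suc L \<and> (i0 + s) mod n = v then 1 else (0::'a)))"
    have "path_act n (uniserial n i0 m) v (Suc L) $$ (r, s)
       = (\<Sum>q\<in>{0..<m}. (if r = q + 1 \<and> (i0 + q) mod n = (v + L) mod n then 1 else 0) *
            (if q = s + L \<and> (i0 + s) mod n = v then 1 else (0::'a)))"
      using r s Suc by (simp add: uniserial_def scalar_prod_def)
    also have "\<dots> = (\<Sum>q\<in>{0..<m}. if q = s + L then (if r = s + Suc L \<and> (i0 + s) mod n = v then 1 else 0) else 0)"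
      by (rule sum.cong) (auto simp: mod_add_left_eq add.assoc)
    also have "\<dots> = (if r = s + Suc L \<and> (i0 + s) mod n = v then 1 else 0)"
      using r s by (auto simp: sum.delta)
    finally show "path_act n (uniserial n i0 m) v (Suc L) $$ (r, s) = mat m m (\<lambda>(r, s). if r = s + Suc L \<and> (i0 + s) mod n = v then 1 else (0::'a)) $$ (r, s)"
      using r s by simp
  qed (use Suc in \<open>auto simp: uniserial_def\<close>)
qed

lemma mult_unit_vec_col:
  fixes f :: "'k::field mat"
  assumes "f \<in> carrier_mat a m" "s < m"
  shows "f *\<^sub>v unit_vec m s = col f s"
  using assms by (intro eq_vecI) auto

lemma zero_mat_mult_vec[simp]:
  fixes x :: "'k::field vec"
  assumes "x \<in> carrier_vec k"
  shows "0\<^sub>m a k *\<^sub>v x = 0\<^sub>v a"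
  using assms by (intro eq_vecI) (auto simp: scalar_prod_def)

lemma mod_carrier:
  assumes "is_module n d N" "v < n"
  shows "ridem N v \<in> carrier_mat (rdim N) (rdim N)" "rarr N v \<in> carrier_mat (rdim N) (rdim N)"
  using assms unfolding is_module_def by auto

lemma mod_idem:
  assumes "is_module n d N" "v < n" "w < n"
  shows "ridem N v * ridem N w = (if v = w then ridem N v else 0\<^sub>m (rdim N) (rdim N))"
  using assms unfolding is_module_def by auto

lemma mod_arr:
  assumes "is_module n d N" "v < n"
  shows "rarr N v = ridem N ((v + 1) mod n) * rarr N v * ridem N v"
  using assms unfolding is_module_def by auto

lemma path_carrier:
  assumes "is_module n d N" "v < n" "0 < n"
  shows "path_act n N v L \<in> carrier_mat (rdim N) (rdim N)"
proof (induction L)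
  case (Suc L)
  have "(v + L) mod n < n" using assms by simp
  then show ?case using Suc mod_carrier[OF assms(1)] by (auto intro!: mult_carrier_mat)
qed (use assms mod_carrier in auto)

lemma sq_assoc:
  fixes A B C :: "'k::field mat"
  assumes "A \<in> carrier_mat k k" "B \<in> carrier_mat k k" "C \<in> carrier_mat k k"
  shows "A * B * C = A * (B * C)"
  using assoc_mult_mat[OF assms] .

lemma path_left:
  assumes N: "is_module n d N" and v: "v < n" and n: "0 < n"
  shows "ridem N ((v + L) mod n) * path_act n N v L = path_act n N v L"
proof (induction L)
  case 0
  then show ?case using mod_idem[OF N v v] v by simp
next
  case (Suc L)
  define w where "w = (v + L) mod n"
  define u where "u = (v + Suc L) mod n"
  have w: "w < n" and u: "u < n" using n by (auto simp: w_def u_def)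
  have uw: "u = (w + 1) mod n" by (simp add: u_def w_def mod_Suc_eq)
  have cE: "\<And>x. x < n \<Longrightarrow> ridem N x \<in> carrier_mat (rdim N) (rdim N)" using mod_carrier[OF N] by auto
  have cA: "rarr N w \<in> carrier_mat (rdim N) (rdim N)" using mod_carrier[OF N w] by auto
  have cP: "path_act n N v L \<in> carrier_mat (rdim N) (rdim N)" using path_carrier[OF N v n] .
  have EA: "ridem N u * rarr N w = rarr N w"
  proof -
    have "ridem N u * rarr N w = ridem N u * (ridem N u * rarr N w * ridem N w)"
      using mod_arr[OF N w] uw by simp
    also have "\<dots> = (ridem N u * ridem N u) * rarr N w * ridem N w"
      using cE[OF u] cE[OF w] cA by (simp add: assoc_mult_mat[of _ "rdim N" "rdim N" _ "rdim N" _ "rdim N"])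
    also have "\<dots> = rarr N w"
      using mod_idem[OF N u u] mod_arr[OF N w] uw by simp
    finally show ?thesis .
  qed
  have "ridem N u * path_act n N v (Suc L) = (ridem N u * rarr N w) * path_act n N v L"
    using cE[OF u] cA cP by (simp add: w_def)
  also have "\<dots> = path_act n N v (Suc L)" using EA by (simp add: w_def)
  finally show ?case by (simp add: u_def)
qed

lemma idem_path_zero:
  assumes N: "is_module n d N" and v: "v < n" and n: "0 < n" and w: "w < n"
    and ne: "w \<noteq> (v + L) mod n"
  shows "ridem N w * path_act n N v L = 0\<^sub>m (rdim N) (rdim N)"
proof -
  have u: "(v + L) mod n < n" using n by simp
  have cP: "path_act n N v L \<in> carrier_mat (rdim N) (rdim N)" using path_carrier[OF N v n] .
  have "ridem N w * path_act n N v L = ridem N w * (ridem N ((v + L) mod n) * path_act n N v L)"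
    using path_left[OF N v n] by simp
  also have "\<dots> = (ridem N w * ridem N ((v + L) mod n)) * path_act n N v L"
    using mod_carrier[OF N w] mod_carrier[OF N u] cP by simp
  also have "\<dots> = 0\<^sub>m (rdim N) (rdim N)" using mod_idem[OF N w u] ne cP by simp
  finally show ?thesis .
qed

lemma idem_path_same:
  assumes N: "is_module n d N" and v: "v < n" and n: "0 < n"
  shows "ridem N ((v + L) mod n) * path_act n N v L = path_act n N v L"
  using path_left[OF assms] .

lemma arr_path_zero:
  assumes N: "is_module n d N" and v: "v < n" and n: "0 < n" and w: "w < n"
    and ne: "w \<noteq> (v + L) mod n"
  shows "rarr N w * path_act n N v L = 0\<^sub>m (rdim N) (rdim N)"
proof -
  have u: "(w + 1) mod n < n" using n by simp
  have cP: "path_act n N v L \<in> carrier_mat (rdim N) (rdim N)" using path_carrier[OF N v n] .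
  have "rarr N w * path_act n N v L = (ridem N ((w + 1) mod n) * rarr N w * ridem N w) * path_act n N v L"
    using mod_arr[OF N w] by simp
  also have "\<dots> = (ridem N ((w + 1) mod n) * rarr N w) * (ridem N w * path_act n N v L)"
    using mod_carrier[OF N w] mod_carrier[OF N u] cP by (simp add: sq_assoc)
  also have "\<dots> = 0\<^sub>m (rdim N) (rdim N)"
    using idem_path_zero[OF N v n w ne] mod_carrier[OF N w] mod_carrier[OF N u] by simp
  finally show ?thesis .
qed

lemma hom_path:
  assumes N: "is_module n d N" and L: "is_module n d L" and g: "is_hom n N L g"
    and v: "v < n" and n: "0 < n"
  shows "g * path_act n N v k = path_act n L v k * g"
proof (induction k)
  case 0
  then show ?case using g v unfolding is_hom_def by simp
next
  case (Suc k)
  define w where "w = (v + k) mod n"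
  have w: "w < n" using n by (simp add: w_def)
  have cg: "g \<in> carrier_mat (rdim L) (rdim N)" using g unfolding is_hom_def by simp
  have ga: "g * rarr N w = rarr L w * g" using g w unfolding is_hom_def by simp
  have "g * path_act n N v (Suc k) = (g * rarr N w) * path_act n N v k"
    using cg mod_carrier[OF N w] path_carrier[OF N v n] by (simp add: w_def assoc_mult_mat[OF cg, of _ "rdim N" _ "rdim N"])
  also have "\<dots> = rarr L w * (g * path_act n N v k)"
    using assoc_mult_mat[OF mod_carrier(2)[OF L w] cg path_carrier[OF N v n]] ga by simp
  also have "\<dots> = (rarr L w * path_act n L v k) * g"
    using assoc_mult_mat[OF mod_carrier(2)[OF L w] path_carrier[OF L v n] cg] Suc by simp
  finally show ?case by (simp add: w_def)
qed

lemma col_idem_uni: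
  assumes "s < m"
  shows "col (ridem (uniserial n i0 m) v) s = (if (i0 + s) mod n = v then unit_vec m s else 0\<^sub>v m)"
  using assms by (intro eq_vecI) (auto simp: uniserial_def)

lemma col_arr_uni:
  assumes "s < m"
  shows "col (rarr (uniserial n i0 m) v) s = (if (i0 + s) mod n = v \<and> Suc s < m then unit_vec m (Suc s) else 0\<^sub>v m)"
  using assms by (intro eq_vecI) (auto simp: uniserial_def)

lemma uni_carrier[simp]:
  "ridem (uniserial n i0 m) v \<in> carrier_mat m m"
  "rarr (uniserial n i0 m) v \<in> carrier_mat m m"
  "rdim (uniserial n i0 m) = m"
  by (auto simp: uniserial_def)

lemma mult_idem_col:
  fixes f :: "'k::field mat"
  assumes cf: "f \<in> carrier_mat a m" and s: "s < m"
  shows "col (f * ridem (uniserial n i0 m) v) s = (if (i0 + s) mod n = v then col f s else 0\<^sub>v a)"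
proof -
  have "col (f * ridem (uniserial n i0 m) v) s = f *\<^sub>v col (ridem (uniserial n i0 m) v) s"
    using col_mult2[OF cf uni_carrier(1) s] .
  moreover have "col (ridem (uniserial n i0 m) v) s = (if (i0 + s) mod n = v then unit_vec m s else (0\<^sub>v m :: 'k vec))"
    by (rule col_idem_uni[OF s])
  ultimately show ?thesis using mult_unit_vec_col[OF cf s] cf by auto
qed

lemma mult_arr_col:
  fixes f :: "'k::field mat"
  assumes cf: "f \<in> carrier_mat a m" and s: "s < m"
  shows "col (f * rarr (uniserial n i0 m) v) s = (if (i0 + s) mod n = v \<and> Suc s < m then col f (Suc s) else 0\<^sub>v a)"
proof -
  have "col (f * rarr (uniserial n i0 m) v) s = f *\<^sub>v col (rarr (uniserial n i0 m) v) s"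
    using col_mult2[OF cf uni_carrier(2) s] .
  moreover have "col (rarr (uniserial n i0 m) v) s = (if (i0 + s) mod n = v \<and> Suc s < m then unit_vec m (Suc s) else (0\<^sub>v m :: 'k vec))"
    by (rule col_arr_uni[OF s])
  ultimately show ?thesis using mult_unit_vec_col[OF cf] cf by auto
qed

lemma hom_carrier: "is_hom n M N f \<Longrightarrow> f \<in> carrier_mat (rdim N) (rdim M)"
  unfolding is_hom_def by simp

lemma hom_col:
  assumes N: "is_module n d N" and n: "0 < n" and i: "i < n"
    and f: "is_hom n (uniserial n i m) N f"
  shows "s < m \<Longrightarrow> col f s = path_act n N i s *\<^sub>v col f 0"
proof (induction s)
  case 0
  have cf: "f \<in> carrier_mat (rdim N) m" using hom_carrier[OF f] by simp
  have "col f 0 = col (f * ridem (uniserial n i m) i) 0"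
    using mult_idem_col[OF cf 0, of n i i] i by simp
  also have "\<dots> = col (ridem N i * f) 0" using f i unfolding is_hom_def by simp
  also have "\<dots> = ridem N i *\<^sub>v col f 0" by (rule col_mult2[OF mod_carrier(1)[OF N i] cf 0])
  finally show ?case by simp
next
  case (Suc s)
  define w where "w = (i + s) mod n"
  have w: "w < n" using n by (simp add: w_def)
  have cf: "f \<in> carrier_mat (rdim N) m" using hom_carrier[OF f] by simp
  have s: "s < m" using Suc by simp
  have "col f (Suc s) = col (f * rarr (uniserial n i m) w) s"
    using mult_arr_col[OF cf s, of n i w] Suc by (simp add: w_def)
  also have "\<dots> = col (rarr N w * f) s" using f w unfolding is_hom_def by simp
  also have "\<dots> = rarr N w *\<^sub>v col f s" by (rule col_mult2[OF mod_carrier(2)[OF N w] cf s])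
  also have "\<dots> = rarr N w *\<^sub>v (path_act n N i s *\<^sub>v col f 0)" using Suc s by simp
  also have "\<dots> = (rarr N w * path_act n N i s) *\<^sub>v col f 0"
    using assoc_mult_mat_vec[OF mod_carrier(2)[OF N w] path_carrier[OF N i n], of "col f 0" s] cf
    by (simp add: carrier_vecI)
  finally show ?case by (simp add: w_def)
qed

lemma hom_kill:
  assumes N: "is_module n d N" and n: "0 < n" and i: "i < n"
    and f: "is_hom n (uniserial n i m) N f" and m: "0 < m"
  shows "path_act n N i m *\<^sub>v col f 0 = 0\<^sub>v (rdim N)"
proof -
  define s where "s = m - 1"
  have s: "s < m" and ms: "m = Suc s" using m by (auto simp: s_def)
  define w where "w = (i + s) mod n"
  have w: "w < n" using n by (simp add: w_def)
  have cf: "f \<in> carrier_mat (rdim N) m" using hom_carrier[OF f] by simp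
  have "0\<^sub>v (rdim N) = col (f * rarr (uniserial n i m) w) s"
    using mult_arr_col[OF cf s, of n i w] ms by (simp add: w_def)
  also have "\<dots> = col (rarr N w * f) s" using f w unfolding is_hom_def by simp
  also have "\<dots> = rarr N w *\<^sub>v col f s" by (rule col_mult2[OF mod_carrier(2)[OF N w] cf s])
  also have "\<dots> = rarr N w *\<^sub>v (path_act n N i s *\<^sub>v col f 0)" using hom_col[OF N n i f s] by simp
  also have "\<dots> = (rarr N w * path_act n N i s) *\<^sub>v col f 0"
    using assoc_mult_mat_vec[OF mod_carrier(2)[OF N w] path_carrier[OF N i n], of "col f 0" s] cf
    by (simp add: carrier_vecI)
  finally show ?thesis by (simp add: w_def ms)
qed

definition hmat :: "nat \<Rightarrow> 'k::field rep \<Rightarrow> nat \<Rightarrow> nat \<Rightarrow> 'k vec \<Rightarrow> 'k mat" where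
  "hmat n N i m x = mat (rdim N) m (\<lambda>(r, s). (path_act n N i s *\<^sub>v x) $ r)"

lemma hmat_carrier: "hmat n N i m x \<in> carrier_mat (rdim N) m"
  by (simp add: hmat_def)

lemma col_hmat:
  assumes N: "is_module n d N" and n: "0 < n" and i: "i < n" and s: "s < m"
  shows "col (hmat n N i m x) s = path_act n N i s *\<^sub>v x"
  using s carrier_matD[OF path_carrier[OF N i n, of s]] by (intro eq_vecI) (auto simp: hmat_def)

lemma hmat_hom:
  assumes N: "is_module n d N" and n: "0 < n" and i: "i < n"
    and x: "x \<in> carrier_vec (rdim N)"
    and kill: "path_act n N i m *\<^sub>v x = 0\<^sub>v (rdim N)"
  shows "is_hom n (uniserial n i m) N (hmat n N i m x)"
  unfolding is_hom_def
proof (intro conjI allI impI)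
  let ?H = "hmat n N i m x"
  show "?H \<in> carrier_mat (rdim N) (rdim (uniserial n i m))" by (simp add: hmat_carrier)
  have cH: "?H \<in> carrier_mat (rdim N) m" by (simp add: hmat_carrier)
  fix v assume v: "v < n"
  show "?H * ridem (uniserial n i m) v = ridem N v * ?H"
  proof (rule mat_col_eqI)
    fix s assume "s < dim_col (ridem N v * ?H)"
    then have s: "s < m" using cH by simp
    have "col (?H * ridem (uniserial n i m) v) s = (if (i + s) mod n = v then path_act n N i s *\<^sub>v x else 0\<^sub>v (rdim N))"
      using mult_idem_col[OF cH s, of n i v] col_hmat[OF N n i s] by auto
    also have "\<dots> = (ridem N v * path_act n N i s) *\<^sub>v x"
      using idem_path_same[OF N i n, of s] idem_path_zero[OF N i n v, of s] x
      by (auto simp: add.commute)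
    also have "\<dots> = ridem N v *\<^sub>v col ?H s"
      using col_hmat[OF N n i s] assoc_mult_mat_vec[OF mod_carrier(1)[OF N v] path_carrier[OF N i n] x] by simp
    also have "\<dots> = col (ridem N v * ?H) s" by (rule col_mult2[OF mod_carrier(1)[OF N v] cH s, symmetric])
    finally show "col (?H * ridem (uniserial n i m) v) s = col (ridem N v * ?H) s" .
  qed (use cH mod_carrier[OF N v] in \<open>auto simp: uniserial_def\<close>)
  show "?H * rarr (uniserial n i m) v = rarr N v * ?H"
  proof (rule mat_col_eqI)
    fix s assume "s < dim_col (rarr N v * ?H)"
    then have s: "s < m" using cH by simp
    have "col (?H * rarr (uniserial n i m) v) s = (if (i + s) mod n = v \<and> Suc s < m then path_act n N i (Suc s) *\<^sub>v x else 0\<^sub>v (rdim N))"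
      using mult_arr_col[OF cH s, of n i v] col_hmat[OF N n i] by auto
    also have "\<dots> = (rarr N v * path_act n N i s) *\<^sub>v x"
    proof (cases "(i + s) mod n = v")
      case True
      then show ?thesis
      proof (cases "Suc s < m")
        case False
        then have "Suc s = m" using s by simp
        have "path_act n N i (Suc s) = rarr N v * path_act n N i s" by (simp only: path_act.simps True)
        then show ?thesis using False kill \<open>Suc s = m\<close> by simp
      qed simp
    next
      case False
      then show ?thesis using arr_path_zero[OF N i n v, of s] x by simp
    qed
    also have "\<dots> = rarr N v *\<^sub>v col ?H s"
      using col_hmat[OF N n i s] assoc_mult_mat_vec[OF mod_carrier(2)[OF N v] path_carrier[OF N i n] x] by simp
    also have "\<dots> = col (rarr N v * ?H) s" by (rule col_mult2[OF mod_carrier(2)[OF N v] cH s, symmetric])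
    finally show "col (?H * rarr (uniserial n i m) v) s = col (rarr N v * ?H) s" .
  qed (use cH mod_carrier[OF N v] in \<open>auto simp: uniserial_def\<close>)
qed

lemma path_uni_vec:
  fixes y :: "'k::field vec"
  assumes y: "y \<in> carrier_vec m" and r: "r < m"
  shows "(path_act n (uniserial n i0 m) v L *\<^sub>v y) $ r
         = (if L \<le> r \<and> (i0 + (r - L)) mod n = v then y $ (r - L) else 0)"
  unfolding path_uni using shift_mat_vec[OF y r, of L "\<lambda>s. (i0 + s) mod n = v"] by simp

lemma idem_uni_vec:
  fixes y :: "'k::field vec"
  assumes y: "y \<in> carrier_vec m" and r: "r < m"
  shows "(ridem (uniserial n i0 m) v *\<^sub>v y) $ r = (if (i0 + r) mod n = v then y $ r else 0)"
  using path_uni_vec[OF y r, of n i0 v 0] by simp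

lemma path_uni_zero:
  assumes "m \<le> L"
  shows "path_act n (uniserial n i0 m) v L = (0\<^sub>m m m :: 'k::field mat)"
  unfolding path_uni using assms by (intro eq_matI) auto

lemma uni_module:
  assumes n: "0 < n" and m: "m \<le> d * n + 1"
  shows "is_module n d (uniserial n i0 m :: 'k::field rep)"
  unfolding is_module_def
proof (intro conjI allI impI)
  let ?U = "uniserial n i0 m :: 'k rep"
  fix v assume v: "v < n"
  show "ridem ?U v \<in> carrier_mat (rdim ?U) (rdim ?U)" by simp
  show "rarr ?U v \<in> carrier_mat (rdim ?U) (rdim ?U)" by simp
  show "path_act n ?U v (d * n + 1) = 0\<^sub>m (rdim ?U) (rdim ?U)"
    using path_uni_zero[OF m, of n i0 v] by (simp del: path_act.simps)
  show "rarr ?U v = ridem ?U ((v + 1) mod n) * rarr ?U v * ridem ?U v"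
  proof (rule mat_col_eqI)
    fix s assume "s < dim_col (ridem ?U ((v + 1) mod n) * rarr ?U v * ridem ?U v)"
    then have s: "s < m" by (simp add: uniserial_def)
    have c1: "ridem ?U ((v + 1) mod n) * rarr ?U v \<in> carrier_mat m m" by (rule mult_carrier_mat[OF uni_carrier(1) uni_carrier(2)])
    have "col (ridem ?U ((v + 1) mod n) * rarr ?U v * ridem ?U v) s
        = (if (i0 + s) mod n = v then col (ridem ?U ((v + 1) mod n) * rarr ?U v) s else 0\<^sub>v m)"
      by (rule mult_idem_col[OF c1 s])
    also have "\<dots> = (if (i0 + s) mod n = v \<and> Suc s < m then col (ridem ?U ((v + 1) mod n)) (Suc s) else 0\<^sub>v m)"
      using mult_arr_col[OF _ s, of "ridem ?U ((v + 1) mod n)" m n i0 v] by simp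
    also have "\<dots> = col (rarr ?U v) s"
    proof -
      have a: "Suc s < m \<Longrightarrow> col (ridem ?U ((v + 1) mod n)) (Suc s) = (if (i0 + Suc s) mod n = (v + 1) mod n then unit_vec m (Suc s) else 0\<^sub>v m)"
        by (rule col_idem_uni)
      have b: "col (rarr ?U v) s = (if (i0 + s) mod n = v \<and> Suc s < m then unit_vec m (Suc s) else 0\<^sub>v m)"
        by (rule col_arr_uni[OF s])
      show ?thesis using a b by (auto simp: mod_Suc_eq)
    qed
    finally show "col (rarr ?U v) s = col (ridem ?U ((v + 1) mod n) * rarr ?U v * ridem ?U v) s" by simp
  qed (simp_all add: uniserial_def)
  fix w assume w: "w < n"
  show "ridem ?U v * ridem ?U w = (if v = w then ridem ?U v else 0\<^sub>m (rdim ?U) (rdim ?U))"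
  proof (rule mat_col_eqI)
    fix s assume "s < dim_col (if v = w then ridem ?U v else 0\<^sub>m (rdim ?U) (rdim ?U))"
    then have s: "s < m" by (simp add: uniserial_def split: if_splits)
    show "col (ridem ?U v * ridem ?U w) s = col (if v = w then ridem ?U v else 0\<^sub>m (rdim ?U) (rdim ?U)) s"
    proof -
      have a: "col (ridem ?U v) s = (if (i0 + s) mod n = v then unit_vec m s else 0\<^sub>v m)"
        by (rule col_idem_uni[OF s])
      show ?thesis using mult_idem_col[OF _ s, of "ridem ?U v" m n i0 w] a s by auto
    qed
  qed (simp_all add: uniserial_def)
next
  let ?U = "uniserial n i0 m :: 'k rep"
  have "\<And>k. idem_sum m (ridem ?U) k = mat m m (\<lambda>(r, s). if r = s \<and> (i0 + s) mod n < k then 1 else 0)"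
  proof -
    fix k show "idem_sum m (ridem ?U) k = mat m m (\<lambda>(r, s). if r = s \<and> (i0 + s) mod n < k then 1 else 0)"
      by (induction k) (auto simp: uniserial_def intro!: eq_matI)
  qed
  then show "idem_sum (rdim ?U) (ridem ?U) n = 1\<^sub>m (rdim ?U)"
    using n by (auto intro!: eq_matI)
qed

lemma hom_comp:
  assumes A: "is_module n d A" and B: "is_module n d B" and C: "is_module n d C"
    and f: "is_hom n A B f" and g: "is_hom n B C g"
  shows "is_hom n A C (g * f)"
  unfolding is_hom_def
proof (intro conjI allI impI)
  have cf: "f \<in> carrier_mat (rdim B) (rdim A)" and cg: "g \<in> carrier_mat (rdim C) (rdim B)"
    using f g by (auto simp: is_hom_def)
  show "g * f \<in> carrier_mat (rdim C) (rdim A)" using cf cg by simp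
  fix v assume v: "v < n"
  have 1: "f * ridem A v = ridem B v * f" "f * rarr A v = rarr B v * f"
    "g * ridem B v = ridem C v * g" "g * rarr B v = rarr C v * g" using f g v by (auto simp: is_hom_def)
  note cA = mod_carrier[OF A v] and cB = mod_carrier[OF B v] and cC = mod_carrier[OF C v]
  have "g * f * ridem A v = g * (f * ridem A v)" using assoc_mult_mat[OF cg cf cA(1)] .
  also have "\<dots> = (g * ridem B v) * f" using 1 assoc_mult_mat[OF cg cB(1) cf] by simp
  also have "\<dots> = ridem C v * (g * f)" using 1 assoc_mult_mat[OF cC(1) cg cf] by simp
  finally show "g * f * ridem A v = ridem C v * (g * f)" .
  have "g * f * rarr A v = g * (f * rarr A v)" using assoc_mult_mat[OF cg cf cA(2)] .
  also have "\<dots> = (g * rarr B v) * f" using 1 assoc_mult_mat[OF cg cB(2) cf] by simp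
  also have "\<dots> = rarr C v * (g * f)" using 1 assoc_mult_mat[OF cC(2) cg cf] by simp
  finally show "g * f * rarr A v = rarr C v * (g * f)" .
qed

lemma proj_uni:
  assumes n: "0 < n" and i: "i < n"
  shows "projective n d (uniserial n i (d * n + 1) :: 'k::field rep)"
  unfolding projective_def
proof (intro conjI allI impI)
  let ?Q = "uniserial n i (d * n + 1) :: 'k rep"
  show "is_module n d ?Q" by (rule uni_module[OF n le_refl])
  fix N L :: "'k rep" and g h
  assume as: "is_module n d N \<and> is_module n d L \<and> is_surj_hom n N L g \<and> is_hom n ?Q L h"
  then have N: "is_module n d N" and L: "is_module n d L" and g: "is_hom n N L g"
    and h: "is_hom n ?Q L h"
    and surj: "\<forall>y \<in> carrier_vec (rdim L). \<exists>x \<in> carrier_vec (rdim N). g *\<^sub>v x = y"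
    unfolding is_surj_hom_def by auto
  have ch: "h \<in> carrier_mat (rdim L) (d * n + 1)" using hom_carrier[OF h] by simp
  have cg: "g \<in> carrier_mat (rdim L) (rdim N)" using hom_carrier[OF g] by simp
  have y: "col h 0 \<in> carrier_vec (rdim L)" using ch by (simp add: carrier_vecI)
  obtain x where x: "x \<in> carrier_vec (rdim N)" and gx: "g *\<^sub>v x = col h 0" using surj y by blast
  have kill: "path_act n N i (d * n + 1) *\<^sub>v x = 0\<^sub>v (rdim N)"
    using N i x unfolding is_module_def by (simp del: path_act.simps)
  let ?h' = "hmat n N i (d * n + 1) x"
  have hh: "is_hom n ?Q N ?h'" by (rule hmat_hom[OF N n i x kill])
  have ch': "?h' \<in> carrier_mat (rdim N) (d * n + 1)" by (rule hmat_carrier)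
  have "g * ?h' = h"
  proof (rule mat_col_eqI)
    fix s assume "s < dim_col h"
    then have s: "s < d * n + 1" using ch by simp
    have "col (g * ?h') s = g *\<^sub>v (path_act n N i s *\<^sub>v x)"
      using col_mult2[OF cg ch' s] col_hmat[OF N n i s] by simp
    also have "\<dots> = (g * path_act n N i s) *\<^sub>v x"
      using assoc_mult_mat_vec[OF cg path_carrier[OF N i n] x] by simp
    also have "\<dots> = (path_act n L i s * g) *\<^sub>v x" using hom_path[OF N L g i n] by simp
    also have "\<dots> = path_act n L i s *\<^sub>v col h 0"
      using assoc_mult_mat_vec[OF path_carrier[OF L i n] cg x] gx by simp
    also have "\<dots> = col h s" using hom_col[OF L n i h s] by simp
    finally show "col (g * ?h') s = col h s" .
  qed (use cg ch ch' in auto)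
  then show "\<exists>h'. is_hom n ?Q N h' \<and> g * h' = h" using hh by blast
qed

definition pimat :: "nat \<Rightarrow> nat \<Rightarrow> 'k::field mat" where
  "pimat l k = mat l k (\<lambda>(r, s). if r = s then 1 else 0)"

lemma pimat_vec:
  fixes x :: "'k::field vec"
  assumes x: "x \<in> carrier_vec k" and r: "r < l" and lk: "l \<le> k"
  shows "(pimat l k *\<^sub>v x) $ r = x $ r"
proof -
  have "(pimat l k *\<^sub>v x) $ r = (\<Sum>s\<in>{0..<k}. (if r = s then 1 else 0) * x $ s)"
    using x r by (simp add: pimat_def scalar_prod_def)
  also have "\<dots> = (\<Sum>s\<in>{0..<k}. if s = r then x $ r else 0)"
    by (rule sum.cong) auto
  also have "\<dots> = x $ r" using r lk by (simp add: sum.delta)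
  finally show ?thesis .
qed

lemma pimat_hmat:
  assumes n: "0 < n" and i: "i < n" and l: "0 < l" "l \<le> k"
  shows "hmat n (uniserial n i l) i k (unit_vec l 0) = (pimat l k :: 'k::field mat)"
proof (rule eq_matI)
  fix r s assume r: "r < dim_row (pimat l k :: 'k mat)" and s: "s < dim_col (pimat l k :: 'k mat)"
  then have r: "r < l" and s: "s < k" by (auto simp: pimat_def)
  have "hmat n (uniserial n i l) i k (unit_vec l 0) $$ (r, s)
      = (path_act n (uniserial n i l) i s *\<^sub>v (unit_vec l 0 :: 'k vec)) $ r"
    using r s by (simp add: hmat_def)
  also have "\<dots> = (if s \<le> r \<and> (i + (r - s)) mod n = i then (unit_vec l 0 :: 'k vec) $ (r - s) else 0)"
    by (rule path_uni_vec[OF unit_vec_carrier r])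
  also have "\<dots> = (if r = s then 1 else 0)" using r i by auto
  also have "\<dots> = pimat l k $$ (r, s)" using r s by (simp add: pimat_def)
  finally show "hmat n (uniserial n i l) i k (unit_vec l 0) $$ (r, s) = (pimat l k :: 'k mat) $$ (r, s)" .
qed (auto simp: pimat_def hmat_def)

lemma pimat_hom:
  assumes n: "0 < n" and i: "i < n" and l: "0 < l" "l \<le> d * n + 1"
  shows "is_hom n (uniserial n i (d * n + 1)) (uniserial n i l) (pimat l (d * n + 1) :: 'k::field mat)"
proof -
  have M: "is_module n d (uniserial n i l :: 'k rep)" by (rule uni_module[OF n l(2)])
  have "is_hom n (uniserial n i (d * n + 1)) (uniserial n i l) (hmat n (uniserial n i l :: 'k rep) i (d * n + 1) (unit_vec l 0))"
  proof (rule hmat_hom[OF M n i])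
    have z: "path_act n (uniserial n i l) i (d * n + 1) = (0\<^sub>m l l :: 'k mat)"
      by (rule path_uni_zero) (use l in simp)
    show "path_act n (uniserial n i l) i (d * n + 1) *\<^sub>v (unit_vec l 0 :: 'k vec) = 0\<^sub>v (rdim (uniserial n i l :: 'k rep))"
      unfolding z by simp
  qed simp
  moreover have "hmat n (uniserial n i l :: 'k rep) i (d * n + 1) (unit_vec l 0) = (pimat l (d * n + 1) :: 'k mat)"
    by (rule pimat_hmat[OF n i l(1) l(2)])
  ultimately show ?thesis by simp
qed

lemma pimat_surj:
  assumes n: "0 < n" and i: "i < n" and l: "0 < l" "l \<le> d * n + 1"
  shows "is_surj_hom n (uniserial n i (d * n + 1)) (uniserial n i l) (pimat l (d * n + 1) :: 'k::field mat)"
  unfolding is_surj_hom_def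
proof (intro conjI ballI)
  show "is_hom n (uniserial n i (d * n + 1)) (uniserial n i l) (pimat l (d * n + 1) :: 'k mat)"
    by (rule pimat_hom[OF n i l])
  fix y :: "'k vec" assume y: "y \<in> carrier_vec (rdim (uniserial n i l :: 'k rep))"
  let ?x = "vec (d * n + 1) (\<lambda>r. if r < l then y $ r else 0)"
  have x: "?x \<in> carrier_vec (rdim (uniserial n i (d * n + 1) :: 'k rep))" by simp
  have "pimat l (d * n + 1) *\<^sub>v ?x = y"
  proof (rule eq_vecI)
    fix r assume "r < dim_vec y"
    then have r: "r < l" using y by simp
    show "(pimat l (d * n + 1) *\<^sub>v ?x) $ r = y $ r"
      using pimat_vec[of ?x "d * n + 1" r l] r l by simp
  qed (use y in \<open>simp add: pimat_def\<close>)
  then show "\<exists>x\<in>carrier_vec (rdim (uniserial n i (d * n + 1) :: 'k rep)). pimat l (d * n + 1) *\<^sub>v x = y"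
    using x by blast
qed

lemma nonfactor:
  assumes n: "0 < n" and i: "i < n" and l: "0 < l" "l \<le> d * n"
    and fac: "factors_through_proj n d (uniserial n i l) (uniserial n i l) (f :: 'k::field mat)"
    and r: "r < l" and rl: "r + l < d * n + 1"
  shows "f $$ (r, 0) = 0"
proof -
  let ?M = "uniserial n i l :: 'k rep"
  let ?Q = "uniserial n i (d * n + 1) :: 'k rep"
  let ?pi = "pimat l (d * n + 1) :: 'k mat"
  have l1: "l \<le> d * n + 1" using l by simp
  obtain P g h where P: "projective n d (P :: 'k rep)" and g: "is_hom n ?M P g"
    and h: "is_hom n P ?M h" and fgh: "f = h * g"
    using fac unfolding factors_through_proj_def by blast
  have Pm: "is_module n d P" using P unfolding projective_def by simp
  have M: "is_module n d ?M" by (rule uni_module[OF n l1])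
  have Q: "is_module n d ?Q" by (rule uni_module[OF n le_refl])
  have ps: "is_surj_hom n ?Q ?M ?pi" by (rule pimat_surj[OF n i l(1) l1])
  have ph: "is_hom n ?Q ?M ?pi" by (rule pimat_hom[OF n i l(1) l1])
  obtain h' where h': "is_hom n P ?Q h'" and ph': "?pi * h' = h"
    using P Q M ps h unfolding projective_def by blast
  have k: "is_hom n ?M ?Q (h' * g)" by (rule hom_comp[OF M Pm Q g h'])
  have ck: "h' * g \<in> carrier_mat (d * n + 1) l" using hom_carrier[OF k] by simp
  define y where "y = col (h' * g) 0"
  have y: "y \<in> carrier_vec (d * n + 1)" using ck l by (simp add: y_def carrier_vecI)
  have kill: "path_act n ?Q i l *\<^sub>v y = 0\<^sub>v (d * n + 1)"
    using hom_kill[OF Q n i k l(1)] by (simp add: y_def)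
  have "(path_act n ?Q i l *\<^sub>v y) $ (r + l) = (if (i + r) mod n = i then y $ r else 0)"
    using path_uni_vec[OF y, of "r + l" n i i l] rl by simp
  then have 1: "(i + r) mod n = i \<Longrightarrow> y $ r = 0" using kill rl by simp
  have "y = ridem ?Q i *\<^sub>v y" using hom_col[OF Q n i k, of 0] l by (simp add: y_def)
  then have "y $ r = (if (i + r) mod n = i then y $ r else 0)"
    using idem_uni_vec[OF y, of r n i i] r l by simp
  then have yr: "y $ r = 0" using 1 by metis
  have cg: "g \<in> carrier_mat (rdim P) l" using hom_carrier[OF g] by simp
  have ch': "h' \<in> carrier_mat (d * n + 1) (rdim P)" using hom_carrier[OF h'] by simp
  have cpi: "?pi \<in> carrier_mat l (d * n + 1)" by (simp add: pimat_def)
  have "f = ?pi * (h' * g)" using fgh ph' assoc_mult_mat[OF cpi ch' cg] by simp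
  then have "col f 0 = ?pi *\<^sub>v y" using col_mult2[OF cpi ck l(1)] by (simp add: y_def)
  then have "f $$ (r, 0) = (?pi *\<^sub>v y) $ r"
    using r l \<open>f = ?pi * (h' * g)\<close> cpi ck by (metis col_def index_vec carrier_matD(1) index_mult_mat(2))
  also have "\<dots> = y $ r" by (rule pimat_vec[OF y r l1])
  finally show ?thesis using yr by simp
qed

lemma factor:
  assumes n: "0 < n" and i: "i < n" and l: "0 < l" "l \<le> d * n"
    and F: "is_hom n (uniserial n i l) (uniserial n i l) (F :: 'k::field mat)"
    and z: "\<And>r. r < l \<Longrightarrow> r + l < d * n + 1 \<Longrightarrow> F $$ (r, 0) = 0"
  shows "factors_through_proj n d (uniserial n i l) (uniserial n i l) F"
proof -
  let ?M = "uniserial n i l :: 'k rep"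
  let ?Q = "uniserial n i (d * n + 1) :: 'k rep"
  let ?pi = "pimat l (d * n + 1) :: 'k mat"
  have l1: "l \<le> d * n + 1" using l by simp
  have M: "is_module n d ?M" by (rule uni_module[OF n l1])
  have Q: "is_module n d ?Q" by (rule uni_module[OF n le_refl])
  have PQ: "projective n d ?Q" by (rule proj_uni[OF n i])
  have ph: "is_hom n ?Q ?M ?pi" by (rule pimat_hom[OF n i l(1) l1])
  have cF: "F \<in> carrier_mat l l" using hom_carrier[OF F] by simp
  define u :: "'k vec" where "u = vec (d * n + 1) (\<lambda>r. if r < l then F $$ (r, 0) else 0)"
  have u: "u \<in> carrier_vec (rdim ?Q)" by (simp add: u_def)
  have u1: "u \<in> carrier_vec (d * n + 1)" by (simp add: u_def)
  have pQ: "\<And>s. path_act n ?Q i s \<in> carrier_mat (d * n + 1) (d * n + 1)" using path_carrier[OF Q i n] by simp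
  have pM: "\<And>s. path_act n ?M i s \<in> carrier_mat l l" using path_carrier[OF M i n] by simp
  have kill: "path_act n ?Q i l *\<^sub>v u = 0\<^sub>v (rdim ?Q)"
  proof (rule eq_vecI)
    fix r assume "r < dim_vec (0\<^sub>v (rdim ?Q) :: 'k vec)"
    then have r: "r < d * n + 1" by simp
    have "(path_act n ?Q i l *\<^sub>v u) $ r = (if l \<le> r \<and> (i + (r - l)) mod n = i then u $ (r - l) else 0)"
      using path_uni_vec[OF _ r, of u n i i l] u by simp
    also have "\<dots> = 0" using z[of "r - l"] r by (auto simp: u_def)
    finally show "(path_act n ?Q i l *\<^sub>v u) $ r = (0\<^sub>v (rdim ?Q) :: 'k vec) $ r" using r by simp
  qed (simp add: path_uni)
  let ?g = "hmat n ?Q i l u"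
  have g: "is_hom n ?M ?Q ?g" by (rule hmat_hom[OF Q n i u kill])
  have cg: "?g \<in> carrier_mat (d * n + 1) l" using hmat_carrier[of n ?Q i l u] by simp
  have cpi: "?pi \<in> carrier_mat l (d * n + 1)" by (simp add: pimat_def)
  have piu: "?pi *\<^sub>v u = col F 0"
  proof (rule eq_vecI)
    fix r assume "r < dim_vec (col F 0)"
    then have r: "r < l" using cF by simp
    show "(?pi *\<^sub>v u) $ r = col F 0 $ r"
      using pimat_vec[OF _ r l1, of u] u r cF l by (simp add: u_def)
  qed (use cF cpi in simp)
  have "F = ?pi * ?g"
  proof (rule mat_col_eqI)
    fix s assume "s < dim_col (?pi * ?g)"
    then have s: "s < l" using cg by simp
    have "col (?pi * ?g) s = ?pi *\<^sub>v (path_act n ?Q i s *\<^sub>v u)"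
      using col_mult2[OF cpi cg s] col_hmat[OF Q n i s] by simp
    also have "\<dots> = (?pi * path_act n ?Q i s) *\<^sub>v u"
      using assoc_mult_mat_vec[OF cpi pQ u1] by simp
    also have "\<dots> = (path_act n ?M i s * ?pi) *\<^sub>v u" using hom_path[OF Q M ph i n] by simp
    also have "\<dots> = path_act n ?M i s *\<^sub>v col F 0"
      using assoc_mult_mat_vec[OF pM cpi u1] piu by simp
    also have "\<dots> = col F s" using hom_col[OF M n i F s] by simp
    finally show "col F s = col (?pi * ?g) s" by simp
  qed (use cF cpi cg in auto)
  then show ?thesis unfolding factors_through_proj_def using PQ g ph by blast
qed

lemma hom_minus_id:
  assumes M: "is_module n d M" and f: "is_hom n M M (f :: 'k::field mat)"
  shows "is_hom n M M (f - c \<cdot>\<^sub>m 1\<^sub>m (rdim M))"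
  unfolding is_hom_def
proof (intro conjI allI impI)
  have cf: "f \<in> carrier_mat (rdim M) (rdim M)" using hom_carrier[OF f] .
  have c1: "c \<cdot>\<^sub>m 1\<^sub>m (rdim M) \<in> carrier_mat (rdim M) (rdim M)" by simp
  show "f - c \<cdot>\<^sub>m 1\<^sub>m (rdim M) \<in> carrier_mat (rdim M) (rdim M)" using minus_carrier_mat[OF c1] cf by simp
  fix v assume v: "v < n"
  note cE = mod_carrier[OF M v]
  have 1: "f * ridem M v = ridem M v * f" "f * rarr M v = rarr M v * f" using f v by (auto simp: is_hom_def)
  show "(f - c \<cdot>\<^sub>m 1\<^sub>m (rdim M)) * ridem M v = ridem M v * (f - c \<cdot>\<^sub>m 1\<^sub>m (rdim M))"
    using 1 minus_mult_distrib_mat[OF cf c1 cE(1)] mult_minus_distrib_mat[OF cE(1) cf c1]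
      mult_smult_assoc_mat[OF one_carrier_mat cE(1)] mult_smult_distrib[OF cE(1) one_carrier_mat] cE
    by simp
  show "(f - c \<cdot>\<^sub>m 1\<^sub>m (rdim M)) * rarr M v = rarr M v * (f - c \<cdot>\<^sub>m 1\<^sub>m (rdim M))"
    using 1 minus_mult_distrib_mat[OF cf c1 cE(2)] mult_minus_distrib_mat[OF cE(2) cf c1]
      mult_smult_assoc_mat[OF one_carrier_mat cE(2)] mult_smult_distrib[OF cE(2) one_carrier_mat] cE
    by simp
qed

lemma vert_ne:
  fixes i n r :: nat
  assumes "i < n" "0 < r" "r < n"
  shows "(i + r) mod n \<noteq> i"
proof (cases "i + r < n")
  case True then show ?thesis using assms by simp
next
  case False
  then have "(i + r) mod n = i + r - n" using assms by (simp add: mod_if)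
  moreover have "i + r - n \<noteq> i" using assms False by arith
  ultimately show ?thesis by simp
qed

lemma brick_iff:
  assumes n: "0 < n" and i: "i < n" and l: "0 < l" "l \<le> d * n"
  shows "stable_brick n d (uniserial n i l :: 'k::field rep) \<longleftrightarrow> (l \<le> n \<or> ((d - 1) * n + 1 \<le> l \<and> l \<le> d * n))"
proof
  let ?M = "uniserial n i l :: 'k rep"
  have l1: "l \<le> d * n + 1" using l by simp
  have M: "is_module n d ?M" by (rule uni_module[OF n l1])
  assume br: "stable_brick n d ?M"
  show "l \<le> n \<or> ((d - 1) * n + 1 \<le> l \<and> l \<le> d * n)"
  proof (rule ccontr)
    assume "\<not> ?thesis"
    then have nl: "n < l" and ld: "l \<le> (d - 1) * n" using l by auto
    have dd: "(d - 1) * n + n = d * n" using l n nl by (cases d) auto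
    let ?f = "hmat n ?M i l (unit_vec l n) :: 'k mat"
    have z: "path_act n ?M i l = (0\<^sub>m l l :: 'k mat)" by (rule path_uni_zero) simp
    have fh: "is_hom n ?M ?M ?f"
      by (rule hmat_hom[OF M n i]) (use z in simp_all)
    obtain c where fac: "factors_through_proj n d ?M ?M (?f - c \<cdot>\<^sub>m 1\<^sub>m (rdim ?M))"
      using br fh unfolding stable_brick_def by blast
    have fe: "\<And>r. r < l \<Longrightarrow> ?f $$ (r, 0) = (if (i + r) mod n = i then (unit_vec l n :: 'k vec) $ r else 0)"
    proof -
      fix r assume r: "r < l"
      have "?f $$ (r, 0) = (path_act n ?M i 0 *\<^sub>v (unit_vec l n :: 'k vec)) $ r" using r l by (simp add: hmat_def)
      also have "\<dots> = (if (i + r) mod n = i then (unit_vec l n :: 'k vec) $ r else 0)"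
        using idem_uni_vec[OF unit_vec_carrier r, of n i i n] by simp
      finally show "?f $$ (r, 0) = (if (i + r) mod n = i then (unit_vec l n :: 'k vec) $ r else 0)" .
    qed
    have cf: "?f \<in> carrier_mat l l" using hmat_carrier[of n ?M i l] by simp
    have a0: "(?f - c \<cdot>\<^sub>m 1\<^sub>m (rdim ?M)) $$ (0, 0) = 0"
      by (rule nonfactor[OF n i l fac]) (use l ld dd in auto)
    have an: "(?f - c \<cdot>\<^sub>m 1\<^sub>m (rdim ?M)) $$ (n, 0) = 0"
      by (rule nonfactor[OF n i l fac]) (use nl ld dd in auto)
    have "c = 0" using a0 fe[of 0] cf l i n nl by simp
    then show False using an fe[of n] cf l i n nl by simp
  qed
next
  let ?M = "uniserial n i l :: 'k rep"
  have l1: "l \<le> d * n + 1" using l by simp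
  have M: "is_module n d ?M" by (rule uni_module[OF n l1])
  assume cond: "l \<le> n \<or> ((d - 1) * n + 1 \<le> l \<and> l \<le> d * n)"
  have small: "\<And>r. r < l \<Longrightarrow> r + l < d * n + 1 \<Longrightarrow> r < n"
  proof -
    fix r assume "r < l" "r + l < d * n + 1"
    then show "r < n" using cond l
      by (cases d) (auto simp: algebra_simps)
  qed
  have part1: "\<forall>f. is_hom n ?M ?M f \<longrightarrow> (\<exists>c. factors_through_proj n d ?M ?M (f - c \<cdot>\<^sub>m 1\<^sub>m (rdim ?M)))"
  proof (intro allI impI)
    fix f :: "'k mat" assume f: "is_hom n ?M ?M f"
    have cf: "f \<in> carrier_mat l l" using hom_carrier[OF f] by simp
    let ?c = "f $$ (0, 0)"
    have Fh: "is_hom n ?M ?M (f - ?c \<cdot>\<^sub>m 1\<^sub>m (rdim ?M))" by (rule hom_minus_id[OF M f])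
    have col0: "col f 0 = ridem ?M i *\<^sub>v col f 0" using hom_col[OF M n i f, of 0] l by simp
    have "factors_through_proj n d ?M ?M (f - ?c \<cdot>\<^sub>m 1\<^sub>m (rdim ?M))"
    proof (rule factor[OF n i l Fh])
      fix r assume r: "r < l" and rl: "r + l < d * n + 1"
      show "(f - ?c \<cdot>\<^sub>m 1\<^sub>m (rdim ?M)) $$ (r, 0) = 0"
      proof (cases "r = 0")
        case True then show ?thesis using cf l by simp
      next
        case False
        have rn: "r < n" by (rule small[OF r rl])
        have cv: "col f 0 \<in> carrier_vec l" using cf l by (simp add: carrier_vecI)
        have "f $$ (r, 0) = col f 0 $ r" using cf r l by simp
        also have "\<dots> = (ridem ?M i *\<^sub>v col f 0) $ r" using col0 by simp
        also have "\<dots> = 0" using idem_uni_vec[OF cv r, of n i i] vert_ne[OF i _ rn] False by simp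
        finally show ?thesis using cf r l False by simp
      qed
    qed
    then show "\<exists>c. factors_through_proj n d ?M ?M (f - c \<cdot>\<^sub>m 1\<^sub>m (rdim ?M))" by blast
  qed
  have part2: "\<not> factors_through_proj n d ?M ?M (1\<^sub>m (rdim ?M))"
  proof
    assume "factors_through_proj n d ?M ?M (1\<^sub>m (rdim ?M))"
    then have "(1\<^sub>m (rdim ?M) :: 'k mat) $$ (0, 0) = 0"
      by (rule nonfactor[OF n i l]) (use l in auto)
    then show False using l by simp
  qed
  show "stable_brick n d ?M" unfolding stable_brick_def using part1 part2 by blast
qed

lemma arith_part:
  fixes n d t r l :: nat
  assumes n: "0 < n" and d: "0 < d" and r: "r < n" and l: "l = t * n + r + 1" and ld: "l \<le> d * n"
  shows "(l \<le> n \<or> ((d - 1) * n + 1 \<le> l \<and> l \<le> d * n)) \<longleftrightarrow> (t = 0 \<or> t = d - 1)"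
proof -
  have tn: "t * n < d * n" using l ld by linarith
  then have td: "t < d" using mult_less_cancel2 by blast
  have up: "l \<le> (t + 1) * n" using l r by simp
  have a: "l \<le> n \<longleftrightarrow> t = 0"
  proof
    assume "l \<le> n"
    then show "t = 0" using l n by (cases t) auto
  qed (use l r in simp)
  have b: "((d - 1) * n + 1 \<le> l) \<longleftrightarrow> t = d - 1"
  proof
    assume h: "(d - 1) * n + 1 \<le> l"
    then have "(d - 1) * n < (t + 1) * n" using up by simp
    then have "d - 1 < t + 1" by (simp only: mult_less_cancel2)
    then show "t = d - 1" using td by simp
  next
    assume "t = d - 1"
    then show "(d - 1) * n + 1 \<le> l" using l by simp
  qed
  show ?thesis using a b ld by auto
qed


theorem corollary2p11:
  fixes n d i j t :: nat
  assumes alg_closed: "\<forall>p :: 'k::field poly. degree p > 0 \<longrightarrow> (\<exists>x. poly p x = 0)"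
    and "0 < n" and "0 < d"
    and "i < n" and "j < n"
    and "Mlen n i j t \<le> d * n + 1"
    and "\<not> projective n d (Mmod n i j t :: 'k rep)"
  shows "(stable_brick n d (Mmod n i j t :: 'k rep)
            \<longleftrightarrow> (ell (Mmod n i j t :: 'k rep) \<le> n
                 \<or> ((d - 1) * n + 1 \<le> ell (Mmod n i j t :: 'k rep) \<and> ell (Mmod n i j t :: 'k rep) \<le> d * n)))
       \<and> ((ell (Mmod n i j t :: 'k rep) \<le> n
                 \<or> ((d - 1) * n + 1 \<le> ell (Mmod n i j t :: 'k rep) \<and> ell (Mmod n i j t :: 'k rep) \<le> d * n))
            \<longleftrightarrow> (t = 0 \<or> t = d - 1))"
proof -
  note n = assms(2) and d = assms(3) and i = assms(4)
  define l where "l = Mlen n i j t"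
  have Mm: "(Mmod n i j t :: 'k rep) = uniserial n i l" by (simp add: Mmod_def l_def)
  have el: "ell (Mmod n i j t :: 'k rep) = l" by (simp add: Mm ell_def uniserial_def)
  define r where "r = (j + n - i) mod n"
  have r: "r < n" using n by (simp add: r_def)
  have lf: "l = t * n + r + 1" by (simp add: l_def r_def Mlen_def)
  have l0: "0 < l" using lf by simp
  have ldn: "l \<le> d * n"
  proof (rule ccontr)
    assume "\<not> l \<le> d * n"
    then have "l = d * n + 1" using assms(6) l_def by simp
    then have "projective n d (Mmod n i j t :: 'k rep)" using Mm proj_uni[OF n i] by simp
    then show False using assms(7) by simp
  qed
  show ?thesis
    unfolding el
    using brick_iff[OF n i l0 ldn] Mm arith_part[OF n d r lf ldn] by simp
qed

end
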